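(* Let $k\ge1$. Every triangulation of $\mathbb{S}^3$ whose $1$-skeleton has a proper $(R_k(3)-1)$-colouring has a $k$-edge-colouring without monochromatic faces.
   Context: A triangulation of $\mathbb{S}^3$ is a simplicial $2$-complex embedded in $\mathbb{S}^3$ such that every connected component of its complement is a tetrahedron. Its faces are its $2$-cells. $R_k(3)$ is the smallest $n$ such that every $k$-edge-colouring of $K_n$ contains a monochromatic triangle. A $k$-edge-colouring is an arbitrary assignment of one of $k$ colours to each edge; a face is monochromatic if all edges on its boundary have the same colour. *)

theory Defs
  imports "HOL-Analysis.Analysis"
begin

definition ramsey3 :: "nat \<Rightarrow> nat" where
  "ramsey3 k = (LEAST n. \<forall>f :: nat set \<Rightarrow> nat.
      (\<forall>e. e \<subseteq> {..<n} \<and> card e = 2 \<longrightarrow> f e < k) \<longrightarrow>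
      (\<exists>T. T \<subseteq> {..<n} \<and> card T = 3 \<and>
           (\<exists>col. \<forall>e. e \<subseteq> T \<and> card e = 2 \<longrightarrow> f e = col)))"

definition std_simplex :: "'v::finite set \<Rightarrow> (real ^ 'v) set" where
  "std_simplex S = convex hull ((\<lambda>i. axis i (1::real)) ` S)"

definition realization :: "'v::finite set set \<Rightarrow> (real ^ 'v) set" where
  "realization K = \<Union> (std_simplex ` K)"

text \<open>A simplicial 2-complex (vertices V, edges E, faces F) together with a
  topological embedding h of its realization into S^3 (unit sphere of R^4),
  such that every connected component of the complement is a tetrahedron,
  i.e. its boundary is exactly the image of the four triangles of a K4 in the complex.\<close>
definition triangulation_S3 ::
  "'v::finite set \<Rightarrow> 'v set set \<Rightarrow> 'v set set \<Rightarrow> (real ^ 'v \<Rightarrow> real ^ 4) \<Rightarrow> bool" where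
  "triangulation_S3 V E F h \<longleftrightarrow>
     (\<forall>e\<in>E. e \<subseteq> V \<and> card e = 2) \<and>
     (\<forall>f\<in>F. f \<subseteq> V \<and> card f = 3) \<and>
     (\<forall>f\<in>F. \<forall>e. e \<subseteq> f \<and> card e = 2 \<longrightarrow> e \<in> E) \<and>
     (let K = {{v} | v. v \<in> V} \<union> E \<union> F in
        continuous_on (realization K) h \<and>
        inj_on h (realization K) \<and>
        h ` realization K \<subseteq> sphere 0 1 \<and>
        (\<forall>C \<in> components (sphere 0 1 - h ` realization K).
           \<exists>T. T \<subseteq> V \<and> card T = 4 \<and>
               (\<forall>f. f \<subseteq> T \<and> card f = 3 \<longrightarrow> f \<in> F) \<and>
               closure C - C = h ` realization {f. f \<subseteq> T \<and> card f = 3}))"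

end

theory Submission
  imports Defs
begin

theorem corollary6p2:
  fixes V :: "'v::finite set" and E F :: "'v set set"
    and h :: "real ^ 'v \<Rightarrow> real ^ 4" and k :: nat and c :: "'v \<Rightarrow> nat"
  assumes "k \<ge> 1"
    and "triangulation_S3 V E F h"
    and "\<forall>v\<in>V. c v < ramsey3 k - 1"
    and "\<forall>e\<in>E. \<forall>u\<in>e. \<forall>w\<in>e. u \<noteq> w \<longrightarrow> c u \<noteq> c w"
  shows "\<exists>g :: 'v set \<Rightarrow> nat. (\<forall>e\<in>E. g e < k) \<and>
           (\<forall>f\<in>F. \<not> (\<exists>col. \<forall>e\<in>E. e \<subseteq> f \<longrightarrow> g e = col))"
proof -
  have tri: "\<forall>e\<in>E. e \<subseteq> V \<and> card e = 2" "\<forall>f\<in>F. f \<subseteq> V \<and> card f = 3"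
    "\<forall>f\<in>F. \<forall>e. e \<subseteq> f \<and> card e = 2 \<longrightarrow> e \<in> E"
    using assms(2) unfolding triangulation_S3_def by auto
  show ?thesis
  proof (cases "V = {}")
    case True
    then have "F = {}" using tri(2) by fastforce
    then show ?thesis using assms(1) by (intro exI[of _ "\<lambda>_. 0"]) auto
  next
    case False
    then have pos: "ramsey3 k - 1 < ramsey3 k" using assms(3) by fastforce
    define n where "n = ramsey3 k - 1"
    have "\<not> (\<forall>f :: nat set \<Rightarrow> nat.
      (\<forall>e. e \<subseteq> {..<n} \<and> card e = 2 \<longrightarrow> f e < k) \<longrightarrow>
      (\<exists>T. T \<subseteq> {..<n} \<and> card T = 3 \<and>
           (\<exists>col. \<forall>e. e \<subseteq> T \<and> card e = 2 \<longrightarrow> f e = col)))"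
      using not_less_Least[OF pos[unfolded ramsey3_def]] unfolding n_def ramsey3_def by blast
    then obtain fc :: "nat set \<Rightarrow> nat" where
      fc1: "\<forall>e. e \<subseteq> {..<n} \<and> card e = 2 \<longrightarrow> fc e < k" and
      fc2: "\<not> (\<exists>T. T \<subseteq> {..<n} \<and> card T = 3 \<and>
           (\<exists>col. \<forall>e. e \<subseteq> T \<and> card e = 2 \<longrightarrow> fc e = col))" by blast
    have cV: "c ` A \<subseteq> {..<n}" if "A \<subseteq> V" for A using assms(3) that n_def by auto
    have injF: "inj_on c fa" if "fa \<in> F" for fa
    proof (rule inj_onI, rule ccontr)
      fix u w assume uw: "u \<in> fa" "w \<in> fa" "c u = c w" "u \<noteq> w"
      have "{u, w} \<in> E" using tri(3) that uw by auto
      then show False using assms(4) uw by auto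
    qed
    define g where "g e = fc (c ` e)" for e
    have "\<forall>e\<in>E. g e < k"
    proof
      fix e assume e: "e \<in> E"
      have "inj_on c e" using assms(4) e by (auto intro: inj_onI)
      then have "card (c ` e) = 2" using tri(1) e card_image by metis
      then show "g e < k" using fc1 cV tri(1) e unfolding g_def by blast
    qed
    moreover have "\<forall>fa\<in>F. \<not> (\<exists>col. \<forall>e\<in>E. e \<subseteq> fa \<longrightarrow> g e = col)"
    proof (intro ballI notI)
      fix fa assume fa: "fa \<in> F" and "\<exists>col. \<forall>e\<in>E. e \<subseteq> fa \<longrightarrow> g e = col"
      then obtain col where col: "\<forall>e\<in>E. e \<subseteq> fa \<longrightarrow> g e = col" by blast
      have inj: "inj_on c fa" using injF fa .
      have "c ` fa \<subseteq> {..<n}" using cV tri(2) fa by blast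
      moreover have "card (c ` fa) = 3" using inj tri(2) fa card_image by metis
      moreover have "\<forall>e'. e' \<subseteq> c ` fa \<and> card e' = 2 \<longrightarrow> fc e' = col"
      proof (intro allI impI)
        fix e' assume e': "e' \<subseteq> c ` fa \<and> card e' = 2"
        define e where "e = fa \<inter> c -` e'"
        have ce: "c ` e = e'" using e' unfolding e_def by auto
        have "inj_on c e" using inj unfolding e_def by (rule inj_on_subset) auto
        then have "card e = 2" using ce e' card_image by metis
        then have "e \<in> E" using tri(3) fa unfolding e_def by auto
        then have "g e = col" using col unfolding e_def by auto
        then show "fc e' = col" using ce unfolding g_def by simp
      qed
      ultimately show False using fc2 by blast
    qed
    ultimately show ?thesis by blast
  qed
qed

end
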